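(* Let $h \ge 2$ and $k \ge 3$ be integers, let $b$ be an integer, and let $A = [0,k-2] \cup \{b\}$. If $b > h(k-2)$, then \[ |hA| = (h+1)\left(1 + \frac{h(k-2)}{2}\right). \] If $b \in [k-1, h(k-2)]$, then there exist unique integers $i_0 \in [0,h-2]$ and $r \in [0,k-3]$ such that $b = (h-i_0)(k-2) - r$, and \[ |hA| = (i_0+1)b + (h-i_0)(h(k-2)+1) - \frac{(h+i_0+1)(h-i_0)(k-2)}{2}. \]
   Context: For real $u,v$, $[u,v] = \{n \in \mathbf{Z} : u \le n \le v\}$. For a positive integer $h$ and a finite set $A$ of integers, $hA$ denotes the set of all sums $a_1+\cdots+a_h$ with $a_1,\ldots,a_h \in A$ (not necessarily distinct). *)

theory Defs
  imports Complex_Main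
begin

definition sumset :: "nat \<Rightarrow> int set \<Rightarrow> int set" where
  "sumset h A = {(\<Sum>i<h. a i) | a. \<forall>i<h. a i \<in> A}"

end

theory Submission imports Defs begin
lemma sumset_0: "sumset 0 A = {0}"
  by (auto simp: sumset_def)

lemma sumset_Suc: "sumset (Suc h) A = {x + y | x y. x \<in> sumset h A \<and> y \<in> A}"
proof
  show "sumset (Suc h) A \<subseteq> {x + y | x y. x \<in> sumset h A \<and> y \<in> A}"
  proof
    fix z assume "z \<in> sumset (Suc h) A"
    then obtain a where a: "\<forall>i<Suc h. a i \<in> A" "z = (\<Sum>i<Suc h. a i)"
      by (auto simp: sumset_def)
    have "(\<Sum>i<h. a i) \<in> sumset h A" using a(1) by (auto simp: sumset_def)
    moreover have "a h \<in> A" using a(1) by auto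
    moreover have "z = (\<Sum>i<h. a i) + a h" using a(2) by simp
    ultimately show "z \<in> {x + y | x y. x \<in> sumset h A \<and> y \<in> A}" by blast
  qed
next
  show "{x + y | x y. x \<in> sumset h A \<and> y \<in> A} \<subseteq> sumset (Suc h) A"
  proof
    fix z assume "z \<in> {x + y | x y. x \<in> sumset h A \<and> y \<in> A}"
    then obtain a y where a: "\<forall>i<h. a i \<in> A" "y \<in> A" "z = (\<Sum>i<h. a i) + y"
      by (auto simp: sumset_def)
    define a' where "a' = a(h := y)"
    have "(\<Sum>i<h. a' i) = (\<Sum>i<h. a i)" unfolding a'_def by (rule sum.cong) auto
    hence "z = (\<Sum>i<Suc h. a' i)" using a(3) by (simp add: a'_def)
    moreover have "\<forall>i<Suc h. a' i \<in> A" using a(1,2) by (auto simp: a'_def less_Suc_eq)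
    ultimately show "z \<in> sumset (Suc h) A" by (auto simp: sumset_def)
  qed
qed

lemma sumset_union:
  assumes m: "0 \<le> m"
  shows "sumset h ({0..m} \<union> {b}) = (\<Union>j\<in>{..h}. {int j*b .. int j*b + int(h-j)*m})"
proof (induction h)
  case 0
  then show ?case by (simp add: sumset_0)
next
  case (Suc h)
  let ?A = "{0..m} \<union> {b}"
  show ?case
  proof
    show "sumset (Suc h) ?A \<subseteq> (\<Union>j\<in>{..Suc h}. {int j*b .. int j*b + int(Suc h-j)*m})"
    proof
      fix x assume "x \<in> sumset (Suc h) ?A"
      then obtain y z where yz: "y \<in> sumset h ?A" "z \<in> ?A" "x = y + z"
        unfolding sumset_Suc by blast
      then obtain j where j: "j \<le> h" "int j*b \<le> y" "y \<le> int j*b + int(h-j)*m"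
        using Suc.IH by auto
      have e1: "int(Suc h - j)*m = int(h-j)*m + m" using j(1)
        by (simp add: of_nat_diff Suc_diff_le algebra_simps)
      have e2: "int (Suc j) * b = int j * b + b" by (simp add: algebra_simps)
      have e3: "int (Suc h - Suc j) = int (h - j)" by simp
      show "x \<in> (\<Union>j\<in>{..Suc h}. {int j*b .. int j*b + int(Suc h-j)*m})"
      proof (cases "z = b")
        case True
        then show ?thesis using j yz e2 e3
          by (intro UN_I[of "Suc j"]) (auto simp del: of_nat_Suc diff_Suc_Suc)
      next
        case False
        then have "0 \<le> z" "z \<le> m" using yz(2) by auto
        then show ?thesis using j yz e1
          by (intro UN_I[of j]) auto
      qed
    qed
  next
    show "(\<Union>j\<in>{..Suc h}. {int j*b .. int j*b + int(Suc h-j)*m}) \<subseteq> sumset (Suc h) ?A"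
    proof
      fix x assume "x \<in> (\<Union>j\<in>{..Suc h}. {int j*b .. int j*b + int(Suc h-j)*m})"
      then obtain j where j: "j \<le> Suc h" "int j*b \<le> x" "x \<le> int j*b + int(Suc h-j)*m"
        by auto
      have mem: "y \<in> sumset h ?A" if "j' \<le> h" "int j'*b \<le> y" "y \<le> int j'*b + int(h-j')*m" for j' y
        using Suc.IH that by auto
      show "x \<in> sumset (Suc h) ?A"
      proof (cases "j = Suc h")
        case True
        then have "x = int h * b + b" using j by (simp add: algebra_simps)
        moreover have "int h * b \<in> sumset h ?A" using mem[of h "int h * b"] by simp
        ultimately show ?thesis unfolding sumset_Suc by blast
      next
        case False
        then have jh: "j \<le> h" using j by simp
        have e1: "int(Suc h - j)*m = int(h-j)*m + m" using jh
          by (simp add: of_nat_diff Suc_diff_le algebra_simps)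
        show ?thesis
        proof (cases "x \<le> int j*b + int(h-j)*m")
          case True
          then have "x \<in> sumset h ?A" using mem[of j x] jh j by simp
          moreover have "(0::int) \<in> ?A" using m by simp
          ultimately show ?thesis unfolding sumset_Suc by force
        next
          case False
          have "int j*b + int(h-j)*m \<in> sumset h ?A" using mem[of j] jh m by simp
          moreover have "x - (int j*b + int(h-j)*m) \<in> ?A" using False j e1 by auto
          ultimately show ?thesis unfolding sumset_Suc
            by (smt (verit, best) mem_Collect_eq)
        qed
      qed
    qed
  qed
qed

lemma sum_closed: "2 * (\<Sum>t<n. int t * m + 1) = int n * (int n - 1) * m + 2 * int n"
  by (induction n) (auto simp: algebra_simps)

lemma sum_reindex:
  assumes "c \<le> h"
  shows "(\<Sum>j\<in>{c<..h}. int (h-j) * m + 1) = (\<Sum>t<h-c. int t * m + 1)"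
  by (rule sum.reindex_bij_witness[of _ "\<lambda>t. h - t" "\<lambda>j. h - j"]) (use assms in auto)

lemma card_union:
  fixes m b :: int and h c :: nat
  assumes m: "1 \<le> m" and bm: "m < b" and ch: "c \<le> h"
    and ca: "\<And>j. j < c \<Longrightarrow> b \<le> int (h-j) * m + 1"
    and cb: "\<And>j. c \<le> j \<Longrightarrow> j \<le> h \<Longrightarrow> int (h-j) * m < b"
  shows "2 * int (card (\<Union>j\<in>{..h}. {int j*b .. int j*b + int(h-j)*m}))
     = 2 * (int c * b + int (h-c) * m + 1) + int (h-c) * (int (h-c) - 1) * m + 2 * int (h-c)"
proof -
  let ?I = "\<lambda>j. {int j*b .. int j*b + int(h-j)*m}"
  let ?E = "int c * b + int (h-c) * m"
  have seteq: "(\<Union>j\<in>{..h}. ?I j) = {0..?E} \<union> (\<Union>j\<in>{c<..h}. ?I j)"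
  proof
    show "(\<Union>j\<in>{..h}. ?I j) \<subseteq> {0..?E} \<union> (\<Union>j\<in>{c<..h}. ?I j)"
    proof
      fix x assume "x \<in> (\<Union>j\<in>{..h}. ?I j)"
      then obtain j where j: "j \<le> h" "int j*b \<le> x" "x \<le> int j*b + int(h-j)*m" by auto
      show "x \<in> {0..?E} \<union> (\<Union>j\<in>{c<..h}. ?I j)"
      proof (cases "j \<le> c")
        case True
        have "(int c - int j) * (b - m) \<ge> 0" using True bm by simp
        moreover have "int j * b \<ge> 0" using bm m by simp
        ultimately have "x \<in> {0..?E}" using j True ch
          by (simp add: of_nat_diff algebra_simps)
        then show ?thesis by blast
      next
        case False
        then show ?thesis using j by auto
      qed
    qed
  next
    show "{0..?E} \<union> (\<Union>j\<in>{c<..h}. ?I j) \<subseteq> (\<Union>j\<in>{..h}. ?I j)"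
    proof
      fix x assume x: "x \<in> {0..?E} \<union> (\<Union>j\<in>{c<..h}. ?I j)"
      show "x \<in> (\<Union>j\<in>{..h}. ?I j)"
      proof (cases "x \<in> {0..?E}")
        case False then show ?thesis using x by auto
      next
        case True
        define q where "q = x div b"
        have b0: "b > 0" using m bm by simp
        have q1: "q * b \<le> x" "x < (q+1) * b" unfolding q_def using b0
        proof -
          have "x div b * b + x mod b = x" by (rule div_mult_mod_eq)
          moreover have "0 \<le> x mod b" "x mod b < b" using b0 by simp_all
          ultimately have "x div b * b \<le> x" "x < x div b * b + b" by linarith+
          then show "x div b * b \<le> x" "x < (x div b + 1) * b" by (simp_all add: distrib_right)
        qed
        have q0: "q \<ge> 0" using True b0 unfolding q_def by (simp add: pos_imp_zdiv_nonneg_iff)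
        show ?thesis
        proof (cases "q < int c")
          case False
          have "int c * b \<le> q * b" using False b0 by (simp add: mult_right_mono)
          then show ?thesis using True q1 ch by (intro UN_I[of c]) auto
        next
          case qc: True
          define j where "j = nat q"
          have jq: "int j = q" using q0 j_def by simp
          have "j < c" using qc jq by simp
          then have "b \<le> int (h-j) * m + 1" by (rule ca)
          then have "x \<le> int j * b + int (h-j) * m" using q1 jq by (simp add: algebra_simps)
          moreover have "j \<le> h" using \<open>j < c\<close> ch by simp
          ultimately show ?thesis using q1 jq by auto
        qed
      qed
    qed
  qed
  have disj1: "{0..?E} \<inter> (\<Union>j\<in>{c<..h}. ?I j) = {}"
  proof -
    have "?E < int j * b" if "c < j" "j \<le> h" for j
    proof -
      have "int (h-c) * m < b" using cb[of c] ch by simp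
      moreover have "int (c+1) * b \<le> int j * b" using that bm m by (intro mult_right_mono) auto
      ultimately show ?thesis by (simp add: algebra_simps)
    qed
    then show ?thesis by fastforce
  qed
  have disj2: "?I i \<inter> ?I j = {}" if "i \<in> {c<..h}" "j \<in> {c<..h}" "i \<noteq> j" for i j
  proof -
    have key: "int i*b + int(h-i)*m < int j * b" if "c < i" "i < j" "j \<le> h" for i j
    proof -
      have "int (h-i) * m < b" using cb[of i] that by simp
      moreover have "int (i+1) * b \<le> int j * b" using that bm m by (intro mult_right_mono) auto
      ultimately show ?thesis by (simp add: algebra_simps)
    qed
    show ?thesis
    proof (cases "i < j")
      case True then show ?thesis using key[of i j] that by fastforce
    next
      case False then have "j < i" using that by simp
      then show ?thesis using key[of j i] that by fastforce
    qed
  qed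
  have "card (\<Union>j\<in>{..h}. ?I j) = card {0..?E} + card (\<Union>j\<in>{c<..h}. ?I j)"
    unfolding seteq by (rule card_Un_disjoint) (use disj1 in auto)
  also have "card (\<Union>j\<in>{c<..h}. ?I j) = (\<Sum>j\<in>{c<..h}. card (?I j))"
    by (rule card_UN_disjoint) (use disj2 in auto)
  finally have c1: "int (card (\<Union>j\<in>{..h}. ?I j)) = int (card {0..?E}) + (\<Sum>j\<in>{c<..h}. int (card (?I j)))"
    by simp
  have E0: "?E \<ge> 0" using m bm by simp
  have "int (card {0..?E}) = ?E + 1" using E0 by simp
  moreover have "(\<Sum>j\<in>{c<..h}. int (card (?I j))) = (\<Sum>j\<in>{c<..h}. int (h-j) * m + 1)"
    by (rule sum.cong) (use m in auto)
  ultimately have "int (card (\<Union>j\<in>{..h}. ?I j)) = ?E + 1 + (\<Sum>t<h-c. int t * m + 1)"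
    using c1 sum_reindex[OF ch, where m=m] by simp
  then show ?thesis using sum_closed[where n="h-c" and m=m] by (simp add: algebra_simps)
qed

theorem mainTheorem7:
  fixes h k :: nat and b :: int
  assumes "h \<ge> 2" and "k \<ge> 3"
  defines "A \<equiv> {0..int k - 2} \<union> {b}"
  shows "(b > int h * (int k - 2) \<longrightarrow>
           (real (card (sumset h A)) = (real h + 1) * (1 + real h * (real k - 2) / 2)))
       \<and> (int k - 1 \<le> b \<and> b \<le> int h * (int k - 2) \<longrightarrow>
           (\<exists>!p :: int \<times> int. 0 \<le> fst p \<and> fst p \<le> int h - 2 \<and> 0 \<le> snd p \<and> snd p \<le> int k - 3
                \<and> b = (int h - fst p) * (int k - 2) - snd p)
         \<and> (\<forall>i0 r :: int. 0 \<le> i0 \<and> i0 \<le> int h - 2 \<and> 0 \<le> r \<and> r \<le> int k - 3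
                \<and> b = (int h - i0) * (int k - 2) - r \<longrightarrow>
              real (card (sumset h A)) =
                real_of_int ((i0 + 1) * b + (int h - i0) * (int h * (int k - 2) + 1))
                - real_of_int ((int h + i0 + 1) * (int h - i0) * (int k - 2)) / 2))"
proof -
  define m where "m = int k - 2"
  have m1: "1 \<le> m" using assms(2) by (simp add: m_def)
  have SA: "sumset h A = (\<Union>j\<in>{..h}. {int j*b .. int j*b + int(h-j)*m})"
    unfolding A_def m_def by (rule sumset_union) (use m1 m_def in simp)
  have rk: "real k - 2 = real_of_int m" by (simp add: m_def)
  have part1: "real (card (sumset h A)) = (real h + 1) * (1 + real h * (real k - 2) / 2)"
    if hb: "b > int h * (int k - 2)"
  proof -
    have hm: "int h * m \<ge> 2 * m" using assms(1) m1 by (intro mult_right_mono) auto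
    have bm: "m < b" using hb hm m1 by (simp add: m_def)
    have cb: "int (h-j) * m < b" if "j \<le> h" for j
    proof -
      have "int (h-j) * m \<le> int h * m" using m1 by (intro mult_right_mono) auto
      then show ?thesis using hb m_def by simp
    qed
    have "2 * int (card (sumset h A)) = 2 * (int 0 * b + int (h-0) * m + 1) + int (h-0) * (int (h-0) - 1) * m + 2 * int (h-0)"
      unfolding SA by (rule card_union[OF m1 bm]) (use cb in auto)
    then have "2 * int (card (sumset h A)) = 2 * (int h * m + 1) + int h * (int h - 1) * m + 2 * int h"
      by simp
    then have "2 * real (card (sumset h A)) = 2 * (real h * m + 1) + real h * (real h - 1) * m + 2 * real h"
      by (metis (mono_tags, opaque_lifting) of_int_of_nat_eq of_int_add of_int_mult of_int_diff of_int_1 of_int_numeral)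
    then show ?thesis unfolding rk by (simp add: field_simps)
  qed
  have ex: "\<exists>!p :: int \<times> int. 0 \<le> fst p \<and> fst p \<le> int h - 2 \<and> 0 \<le> snd p \<and> snd p \<le> int k - 3
                \<and> b = (int h - fst p) * (int k - 2) - snd p"
    if hb: "int k - 1 \<le> b \<and> b \<le> int h * (int k - 2)"
  proof -
    define q where "q = (b + m - 1) div m"
    have d: "q * m + (b + m - 1) mod m = b + m - 1" unfolding q_def by (rule div_mult_mod_eq)
    have md: "0 \<le> (b + m - 1) mod m" "(b + m - 1) mod m < m" using m1 by simp_all
    have b1: "m + 1 \<le> b" "b \<le> int h * m" using hb m_def by auto
    have q2: "q \<ge> 2"
    proof (rule ccontr)
      assume "\<not> q \<ge> 2" then have "q \<le> 1" by simp
      then have "q * m \<le> 1 * m" using m1 by (intro mult_right_mono) auto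
      then show False using d md b1 by linarith
    qed
    have qh: "q \<le> int h"
    proof (rule ccontr)
      assume "\<not> q \<le> int h" then have "q \<ge> int h + 1" by simp
      then have "q * m \<ge> (int h + 1) * m" using m1 by (intro mult_right_mono) auto
      then show False using d md b1 by (simp add: algebra_simps)
    qed
    have uniq: "i = i'" if "b = (int h - i) * m - r" "b = (int h - i') * m - r'"
      "0 \<le> r" "r \<le> m - 1" "0 \<le> r'" "r' \<le> m - 1" for i i' r r'
    proof (rule ccontr)
      assume "i \<noteq> i'"
      then consider "i + 1 \<le> i'" | "i' + 1 \<le> i" by linarith
      then show False
      proof cases
        case 1
        then have "(i' - i) * m \<ge> 1 * m" using m1 by (intro mult_right_mono) auto
        then show False using that by (simp add: algebra_simps)
      next
        case 2
        then have "(i - i') * m \<ge> 1 * m" using m1 by (intro mult_right_mono) auto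
        then show False using that by (simp add: algebra_simps)
      qed
    qed
    show ?thesis
    proof (rule ex1I[of _ "(int h - q, q * m - b)"])
      show "0 \<le> fst (int h - q, q * m - b) \<and> fst (int h - q, q * m - b) \<le> int h - 2 \<and>
        0 \<le> snd (int h - q, q * m - b) \<and> snd (int h - q, q * m - b) \<le> int k - 3 \<and>
        b = (int h - fst (int h - q, q * m - b)) * (int k - 2) - snd (int h - q, q * m - b)"
        using q2 qh d md m_def by auto
    next
      fix p :: "int \<times> int"
      assume p: "0 \<le> fst p \<and> fst p \<le> int h - 2 \<and> 0 \<le> snd p \<and> snd p \<le> int k - 3 \<and>
        b = (int h - fst p) * (int k - 2) - snd p"
      have p1: "b = (int h - fst p)*m - snd p" "0 \<le> snd p" "snd p \<le> m-1" using p m_def by auto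
      have p2: "b = (int h - (int h - q))*m - (q*m - b)" by simp
      have p3: "0 \<le> q*m - b" "q*m-b \<le> m-1" using d md by linarith+
      have "fst p = int h - q"
        by (rule uniq[OF p1(1) p2 p1(2,3) p3])
      moreover have "snd p = q * m - b" using p calculation m_def by simp
      ultimately show "p = (int h - q, q * m - b)" by (simp add: prod_eq_iff)
    qed
  qed
  have part2: "real (card (sumset h A)) =
                real_of_int ((i0 + 1) * b + (int h - i0) * (int h * (int k - 2) + 1))
                - real_of_int ((int h + i0 + 1) * (int h - i0) * (int k - 2)) / 2"
    if hi: "0 \<le> i0 \<and> i0 \<le> int h - 2 \<and> 0 \<le> r \<and> r \<le> int k - 3
                \<and> b = (int h - i0) * (int k - 2) - r" for i0 r
  proof -
    define c where "c = nat (i0 + 1)"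
    have ci: "int c = i0 + 1" using hi c_def by simp
    have ch: "c \<le> h" using ci hi by simp
    have bdef: "b = (int h - i0) * m - r" and r: "0 \<le> r" "r \<le> m - 1" using hi m_def by auto
    have "(int h - i0) * m \<ge> 2 * m" using hi m1 by (intro mult_right_mono) auto
    then have bm: "m < b" using bdef r by linarith
    have ca: "b \<le> int (h-j) * m + 1" if "j < c" for j
    proof -
      have "(int h - int j) * m \<ge> (int h - i0) * m" using that ci m1 by (intro mult_right_mono) auto
      moreover have "int (h-j) * m = (int h - int j) * m" using that ch by (simp add: of_nat_diff)
      ultimately show ?thesis using bdef r by linarith
    qed
    have cb: "int (h-j) * m < b" if "c \<le> j" "j \<le> h" for j
    proof -
      have "(int h - int j) * m \<le> (int h - i0 - 1) * m" using that ci m1 by (intro mult_right_mono) auto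
      moreover have "int (h-j) * m = (int h - int j) * m" using that by (simp add: of_nat_diff)
      moreover have "(int h - i0 - 1) * m = (int h - i0) * m - m" by (simp add: algebra_simps)
      ultimately show ?thesis using bdef r by linarith
    qed
    have "2 * int (card (sumset h A)) = 2 * (int c * b + int (h-c) * m + 1) + int (h-c) * (int (h-c) - 1) * m + 2 * int (h-c)"
      unfolding SA by (rule card_union[OF m1 bm ch ca cb])
    then have "2 * int (card (sumset h A)) = 2 * ((i0 + 1) * b + (int h - i0 - 1) * m + 1) + (int h - i0 - 1) * (int h - i0 - 2) * m + 2 * (int h - i0 - 1)"
      using ci ch by (simp add: of_nat_diff algebra_simps)
    then have "2 * int (card (sumset h A)) = 2 * ((i0 + 1) * b + (int h - i0) * (int h * m + 1)) - (int h + i0 + 1) * (int h - i0) * m"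
      by (simp add: algebra_simps)
    then have "2 * real (card (sumset h A)) = real_of_int (2 * ((i0 + 1) * b + (int h - i0) * (int h * m + 1)) - (int h + i0 + 1) * (int h - i0) * m)"
      by (metis of_int_of_nat_eq of_int_mult of_int_numeral)
    then show ?thesis unfolding m_def[symmetric] by (simp add: field_simps)
  qed
  show ?thesis using part1 ex part2 by blast
qed

end
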